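(* Let $L$ be a Poisson $\mathfrak{h}$-base manifold. Then the bivector field $\varpi:=\sum_i\vec{\eta^i}\wedge\vec{h^i}$ is a Poisson bracket on $L$ making $L$ a Poisson-Lie $D(\mathfrak{h})$-manifold, and $\varpi$ coincides with the bivector field $\sum_i\vec{\eta^i}\otimes\vec{h^i}$, i.e. $\varpi(a,b)=\sum_i(\vec{\eta^i}a)(\vec{h^i}b)$.
   Context: $\mathfrak{h}$ is a finite dimensional complex Lie bialgebra and $D(\mathfrak{h})=\mathfrak{h}\oplus\mathfrak{h}^*_{op}$ its Drinfeld double ($\mathfrak{h}^*_{op}$ the dual Lie algebra with opposite bracket; $D(\mathfrak{h})$ carries the unique Lie bracket extending those of $\mathfrak{h}$, $\mathfrak{h}^*_{op}$ for which the natural symmetric pairing is invariant). $\{h^i\}$ is a basis of $\mathfrak{h}$ and $\{\eta^i\}$ the dual basis of $\mathfrak{h}^*_{op}$; $x\wedge y=\frac12(x\otimes y-y\otimes x)$. $D(\mathfrak{h})$ is a coboundary Lie bialgebra with r-matrix $r=\sum_i\eta^i\wedge h^i$, cobracket $\mu(x)=[x\otimes1+1\otimes x,r]$, and $\theta=\frac12\sum_i(\eta^i\otimes h^i+h^i\otimes\eta^i)$. A Poisson $\mathfrak{h}$-base manifold is a manifold $L$ whose function algebra $\mathcal{A}(L)$ carries an action $x\mapsto\vec x$ of $D(\mathfrak{h})$ by vector fields such that $\theta$ induces the zero bidifferential operator: $\sum_i\bigl((\vec{\eta^i}a)(\vec{h^i}b)+(\vec{h^i}a)(\vec{\eta^i}b)\bigr)=0$.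 A Poisson bracket $\pi$ on a manifold with action $x\mapsto\vec x$ of a Lie bialgebra with cobracket $\mu$ makes it a Poisson-Lie manifold if $\vec x\pi(a,b)-\pi(\vec xa,b)-\pi(a,\vec xb)=\overrightarrow{\mu(x)}(a,b)$ for all $x$ and functions $a,b$, where $\overrightarrow{\mu(x)}$ is the bidifferential operator induced by $\mu(x)$. *)

theory Defs
  imports "HOL-Analysis.Analysis"
begin

definition lie_bracket_on :: "(complex^'k \<Rightarrow> complex^'k \<Rightarrow> complex^'k) \<Rightarrow> bool" where
  "lie_bracket_on B \<longleftrightarrow>
     (\<forall>x y z. B (x + y) z = B x z + B y z) \<and>
     (\<forall>x y z. B x (y + z) = B x y + B x z) \<and>
     (\<forall>c x y. B (c *s x) y = c *s B x y) \<and>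
     (\<forall>c x y. B x (c *s y) = c *s B x y) \<and>
     (\<forall>x. B x x = 0) \<and>
     (\<forall>x y z. B x (B y z) + B y (B z x) + B z (B x y) = 0)"

section \<open>Lie bialgebra h = complex^'n with standard basis h^i = axis i 1\<close>

text \<open>Elements of h \<otimes> h are coefficient matrices: T $ i $ j is the coefficient of h^i \<otimes> h^j.\<close>

text \<open>Dual Lie bracket on h* (coordinates w.r.t. the dual basis), transpose of the cobracket:
  [xi,zeta](x) = <xi \<otimes> zeta, delta x>.\<close>
definition dual_br :: "(complex^'n \<Rightarrow> complex^'n^'n) \<Rightarrow> complex^'n \<Rightarrow> complex^'n \<Rightarrow> complex^'n::finite" where
  "dual_br delta xi zeta = (\<chi> k. \<Sum>i\<in>UNIV. \<Sum>j\<in>UNIV. xi$i * zeta$j * delta (axis k 1) $ i $ j)"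

text \<open>Adjoint action of x on h \<otimes> h: x.(a\<otimes>b) = [x,a]\<otimes>b + a\<otimes>[x,b].\<close>
definition adT :: "(complex^'n \<Rightarrow> complex^'n \<Rightarrow> complex^'n) \<Rightarrow> complex^'n \<Rightarrow> complex^'n^'n \<Rightarrow> complex^'n^'n::finite" where
  "adT br x T = (\<chi> i j. (\<Sum>a\<in>UNIV. T$a$j * (br x (axis a 1))$i) + (\<Sum>a\<in>UNIV. T$i$a * (br x (axis a 1))$j))"

definition lie_bialgebra :: "(complex^'n \<Rightarrow> complex^'n \<Rightarrow> complex^'n) \<Rightarrow> (complex^'n \<Rightarrow> complex^'n^'n::finite) \<Rightarrow> bool" where
  "lie_bialgebra br delta \<longleftrightarrow>
     lie_bracket_on br \<and>
     (\<forall>x y. delta (x + y) = delta x + delta y) \<and>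
     (\<forall>c x. delta (c *s x) = (\<chi> i j. c * delta x $ i $ j)) \<and>
     (\<forall>x i j. delta x $ i $ j = - delta x $ j $ i) \<and>
     lie_bracket_on (dual_br delta) \<and>
     (\<forall>x y. delta (br x y) = adT br x (delta y) - adT br y (delta x))"

section \<open>The Drinfeld double D(h) = h \<oplus> h*_op, realised as complex^('n + 'n)\<close>

text \<open>Inl i-coordinate = coefficient of h^i, Inr i-coordinate = coefficient of eta^i.\<close>
definition hD :: "'n::finite \<Rightarrow> complex^('n + 'n)" where
  "hD i = axis (Inl i) 1"

definition etaD :: "'n::finite \<Rightarrow> complex^('n + 'n)" where
  "etaD i = axis (Inr i) 1"

definition embH :: "complex^'n \<Rightarrow> complex^('n::finite + 'n)" where
  "embH x = (\<chi> k. case k of Inl i \<Rightarrow> x$i | Inr j \<Rightarrow> 0)"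

definition embHs :: "complex^'n \<Rightarrow> complex^('n::finite + 'n)" where
  "embHs xi = (\<chi> k. case k of Inl i \<Rightarrow> 0 | Inr j \<Rightarrow> xi$j)"

definition pairD :: "complex^('n::finite + 'n) \<Rightarrow> complex^('n + 'n) \<Rightarrow> complex" where
  "pairD u v = (\<Sum>i\<in>UNIV. u$(Inl i) * v$(Inr i) + u$(Inr i) * v$(Inl i))"

text \<open>bD is the Drinfeld double bracket: the (unique) Lie bracket on h \<oplus> h*_op extending the
  bracket of h and the opposite of the dual bracket of h*, for which the pairing is invariant.\<close>
definition drinfeld_double_bracket ::
  "(complex^'n \<Rightarrow> complex^'n \<Rightarrow> complex^'n) \<Rightarrow> (complex^'n \<Rightarrow> complex^'n^'n)
   \<Rightarrow> (complex^('n + 'n) \<Rightarrow> complex^('n + 'n) \<Rightarrow> complex^('n::finite + 'n)) \<Rightarrow> bool" where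
  "drinfeld_double_bracket br delta bD \<longleftrightarrow>
     lie_bracket_on bD \<and>
     (\<forall>x y. bD (embH x) (embH y) = embH (br x y)) \<and>
     (\<forall>xi zeta. bD (embHs xi) (embHs zeta) = embHs (- dual_br delta xi zeta)) \<and>
     (\<forall>u v w. pairD (bD u v) w = pairD u (bD v w))"

definition fun_subalgebra :: "('m \<Rightarrow> complex) set \<Rightarrow> bool" where
  "fun_subalgebra A \<longleftrightarrow> (\<forall>c. (\<lambda>p. c) \<in> A) \<and>
     (\<forall>a\<in>A. \<forall>b\<in>A. (\<lambda>p. a p + b p) \<in> A \<and> (\<lambda>p. a p * b p) \<in> A)"

text \<open>Vector fields = complex-linear derivations of the function algebra.\<close>
definition derivation_on :: "('m \<Rightarrow> complex) set \<Rightarrow> (('m \<Rightarrow> complex) \<Rightarrow> ('m \<Rightarrow> complex)) \<Rightarrow> bool" where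
  "derivation_on A X \<longleftrightarrow>
     (\<forall>a\<in>A. X a \<in> A) \<and>
     (\<forall>a\<in>A. \<forall>b\<in>A. X (\<lambda>p. a p + b p) = (\<lambda>p. X a p + X b p)) \<and>
     (\<forall>c. \<forall>a\<in>A. X (\<lambda>p. c * a p) = (\<lambda>p. c * X a p)) \<and>
     (\<forall>a\<in>A. \<forall>b\<in>A. X (\<lambda>p. a p * b p) = (\<lambda>p. X a p * b p + a p * X b p))"

definition poisson_bracket_on :: "('m \<Rightarrow> complex) set \<Rightarrow> (('m \<Rightarrow> complex) \<Rightarrow> ('m \<Rightarrow> complex) \<Rightarrow> ('m \<Rightarrow> complex)) \<Rightarrow> bool" where
  "poisson_bracket_on A P \<longleftrightarrow>
     (\<forall>a\<in>A. \<forall>b\<in>A. P a b = (\<lambda>p. - P b a p)) \<and>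
     (\<forall>a\<in>A. derivation_on A (P a)) \<and>
     (\<forall>b\<in>A. derivation_on A (\<lambda>a. P a b)) \<and>
     (\<forall>a\<in>A. \<forall>b\<in>A. \<forall>c\<in>A. (\<lambda>p. P a (P b c) p + P b (P c a) p + P c (P a b) p) = (\<lambda>p. 0))"

definition lie_action_on :: "('m \<Rightarrow> complex) set \<Rightarrow> (complex^'k \<Rightarrow> complex^'k \<Rightarrow> complex^'k)
    \<Rightarrow> (complex^'k \<Rightarrow> ('m \<Rightarrow> complex) \<Rightarrow> ('m \<Rightarrow> complex)) \<Rightarrow> bool" where
  "lie_action_on A B act \<longleftrightarrow>
     (\<forall>u. derivation_on A (act u)) \<and>
     (\<forall>u v. \<forall>a\<in>A. act (u + v) a = (\<lambda>p. act u a p + act v a p)) \<and>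
     (\<forall>c u. \<forall>a\<in>A. act (c *s u) a = (\<lambda>p. c * act u a p)) \<and>
     (\<forall>u v. \<forall>a\<in>A. act (B u v) a = (\<lambda>p. act u (act v a) p - act v (act u a) p))"

text \<open>u \<otimes> v induces (a,b) \<mapsto> (u a)(v b); u \<wedge> v = (u\<otimes>v - v\<otimes>u)/2.\<close>
definition simple_op where
  "simple_op act u v a b = (\<lambda>p. act u a p * act v b p)"

definition wedge_op where
  "wedge_op act u v a b = (\<lambda>p. (act u a p * act v b p - act v a p * act u b p) / 2)"

text \<open>varpi = operator induced by r = \<Sum>_i eta^i \<wedge> h^i.\<close>
definition varpi :: "(complex^('n::finite + 'n) \<Rightarrow> ('m \<Rightarrow> complex) \<Rightarrow> ('m \<Rightarrow> complex))
    \<Rightarrow> ('m \<Rightarrow> complex) \<Rightarrow> ('m \<Rightarrow> complex) \<Rightarrow> ('m \<Rightarrow> complex)" where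
  "varpi act a b = (\<lambda>p. \<Sum>i\<in>(UNIV::'n set). wedge_op act (etaD i) (hD i) a b p)"

definition theta_op :: "(complex^('n::finite + 'n) \<Rightarrow> ('m \<Rightarrow> complex) \<Rightarrow> ('m \<Rightarrow> complex))
    \<Rightarrow> ('m \<Rightarrow> complex) \<Rightarrow> ('m \<Rightarrow> complex) \<Rightarrow> ('m \<Rightarrow> complex)" where
  "theta_op act a b = (\<lambda>p. (\<Sum>i\<in>(UNIV::'n set).
       simple_op act (etaD i) (hD i) a b p + simple_op act (hD i) (etaD i) a b p) / 2)"

text \<open>mu(x) = [x\<otimes>1 + 1\<otimes>x, r] = \<Sum>_i ([x,eta^i] \<wedge> h^i + eta^i \<wedge> [x,h^i]), and its induced operator.\<close>
definition mu_op :: "(complex^('n::finite + 'n) \<Rightarrow> complex^('n + 'n) \<Rightarrow> complex^('n + 'n))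
    \<Rightarrow> (complex^('n + 'n) \<Rightarrow> ('m \<Rightarrow> complex) \<Rightarrow> ('m \<Rightarrow> complex))
    \<Rightarrow> complex^('n + 'n) \<Rightarrow> ('m \<Rightarrow> complex) \<Rightarrow> ('m \<Rightarrow> complex) \<Rightarrow> ('m \<Rightarrow> complex)" where
  "mu_op bD act x a b = (\<lambda>p. \<Sum>i\<in>(UNIV::'n set).
       wedge_op act (bD x (etaD i)) (hD i) a b p + wedge_op act (etaD i) (bD x (hD i)) a b p)"

definition poisson_base_manifold ::
  "(complex^'n \<Rightarrow> complex^'n \<Rightarrow> complex^'n) \<Rightarrow> (complex^'n \<Rightarrow> complex^'n^'n)
   \<Rightarrow> (complex^('n + 'n) \<Rightarrow> complex^('n + 'n) \<Rightarrow> complex^('n::finite + 'n))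
   \<Rightarrow> ('m \<Rightarrow> complex) set \<Rightarrow> (complex^('n + 'n) \<Rightarrow> ('m \<Rightarrow> complex) \<Rightarrow> ('m \<Rightarrow> complex)) \<Rightarrow> bool" where
  "poisson_base_manifold br delta bD A act \<longleftrightarrow>
     lie_bialgebra br delta \<and> drinfeld_double_bracket br delta bD \<and>
     fun_subalgebra A \<and> lie_action_on A bD act \<and>
     (\<forall>a\<in>A. \<forall>b\<in>A. theta_op act a b = (\<lambda>p. 0))"

definition poisson_lie_manifold ::
  "('m \<Rightarrow> complex) set \<Rightarrow> (complex^'k \<Rightarrow> ('m \<Rightarrow> complex) \<Rightarrow> ('m \<Rightarrow> complex))
   \<Rightarrow> (complex^'k \<Rightarrow> ('m \<Rightarrow> complex) \<Rightarrow> ('m \<Rightarrow> complex) \<Rightarrow> ('m \<Rightarrow> complex))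
   \<Rightarrow> (('m \<Rightarrow> complex) \<Rightarrow> ('m \<Rightarrow> complex) \<Rightarrow> ('m \<Rightarrow> complex)) \<Rightarrow> bool" where
  "poisson_lie_manifold A act muop P \<longleftrightarrow>
     poisson_bracket_on A P \<and>
     (\<forall>x. \<forall>a\<in>A. \<forall>b\<in>A.
        (\<lambda>p. act x (P a b) p - P (act x a) b p - P a (act x b) p) = muop x a b)"

end

theory Submission
  imports Defs
begin

lemma basis_exp: "(x::'a::comm_ring_1^'k::finite) = (\<Sum>i\<in>UNIV. x$i *s axis i 1)"
  by (simp add: vec_eq_iff sum_component axis_def if_distrib cong: if_cong)

lemma sumP: "(\<Sum>k\<in>(UNIV::('a::finite+'b::finite) set). f k) = (\<Sum>i\<in>UNIV. f (Inl i)) + (\<Sum>j\<in>UNIV. f (Inr j))"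
  by (subst UNIV_Plus_UNIV[symmetric], subst sum.Plus) (auto simp: comp_def)

lemma pair_eta: "pairD u (etaD k) = u $ Inl k"
proof -
  have "pairD u (etaD k) = (\<Sum>i\<in>UNIV. if i = k then u $ Inl i else 0)"
    unfolding pairD_def etaD_def axis_def by (intro sum.cong) auto
  then show ?thesis by simp
qed
lemma pair_h: "pairD u (hD k) = u $ Inr k"
proof -
  have "pairD u (hD k) = (\<Sum>i\<in>UNIV. if i = k then u $ Inr i else 0)"
    unfolding pairD_def hD_def axis_def by (intro sum.cong) auto
  then show ?thesis by simp
qed
lemma pair_sym: "pairD u v = pairD v u"
  unfolding pairD_def by (simp add: mult.commute add.commute)
lemma pair_add: "pairD u (v + w) = pairD u v + pairD u w"
  unfolding pairD_def by (simp add: sum.distrib algebra_simps)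
lemma pair_zero: "pairD u 0 = 0"
  unfolding pairD_def by simp
lemma hD_emb: "hD i = embH (axis i 1)"
  by (simp add: vec_eq_iff hD_def embH_def axis_def split: sum.split)
lemma etaD_emb: "etaD i = embHs (axis i 1)"
  by (simp add: vec_eq_iff etaD_def embHs_def axis_def split: sum.split)
lemma pair_HH: "pairD (embH x) (embH y) = 0"
  by (simp add: pairD_def embH_def)
lemma pair_SS: "pairD (embHs x) (embHs y) = 0"
  by (simp add: pairD_def embHs_def)

lemma lie_antisym: assumes "lie_bracket_on B" shows "B x y + B y x = 0"
proof -
  have "B (x+y) (x+y) = 0" "B x x = 0" "B y y = 0" using assms unfolding lie_bracket_on_def by blast+
  moreover have "B (x+y) (x+y) = B x x + B x y + (B y x + B y y)"
  proof -
    have l: "\<And>x y z. B (x + y) z = B x z + B y z" and r: "\<And>x y z. B x (y + z) = B x y + B x z"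
      using assms unfolding lie_bracket_on_def by blast+
    show ?thesis by (simp add: l r add.assoc)
  qed
  ultimately show ?thesis by simp
qed


lemma swap3: "(\<Sum>i\<in>I. \<Sum>j\<in>J. \<Sum>k\<in>K. f i j k) = (\<Sum>k\<in>K. \<Sum>j\<in>J. \<Sum>i\<in>I. (f i j k :: complex))"
proof -
  have "(\<Sum>i\<in>I. \<Sum>j\<in>J. \<Sum>k\<in>K. f i j k) = (\<Sum>i\<in>I. \<Sum>k\<in>K. \<Sum>j\<in>J. f i j k)"
    by (intro sum.cong refl) (rule sum.swap)
  also have "\<dots> = (\<Sum>k\<in>K. \<Sum>i\<in>I. \<Sum>j\<in>J. f i j k)" by (rule sum.swap)
  also have "\<dots> = (\<Sum>k\<in>K. \<Sum>j\<in>J. \<Sum>i\<in>I. f i j k)"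
    by (intro sum.cong refl) (rule sum.swap)
  finally show ?thesis .
qed

lemma swap23: "(\<Sum>i\<in>I. \<Sum>j\<in>J. \<Sum>k\<in>K. f i j k) = (\<Sum>i\<in>I. \<Sum>k\<in>K. \<Sum>j\<in>J. (f i j k :: complex))"
  by (intro sum.cong refl) (rule sum.swap)

lemma sub_add: "fun_subalgebra A \<Longrightarrow> a \<in> A \<Longrightarrow> b \<in> A \<Longrightarrow> (\<lambda>p. a p + b p) \<in> A"
  unfolding fun_subalgebra_def by blast
lemma sub_mul: "fun_subalgebra A \<Longrightarrow> a \<in> A \<Longrightarrow> b \<in> A \<Longrightarrow> (\<lambda>p. a p * b p) \<in> A"
  unfolding fun_subalgebra_def by blast
lemma sub_const: "fun_subalgebra A \<Longrightarrow> (\<lambda>p. c) \<in> A"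
  unfolding fun_subalgebra_def by blast
lemma sub_cmul: "fun_subalgebra A \<Longrightarrow> a \<in> A \<Longrightarrow> (\<lambda>p. c * a p) \<in> A"
  using sub_mul[of A "\<lambda>p. c" a] sub_const by blast
lemma sub_sum: assumes "fun_subalgebra A" "finite S" "\<forall>i\<in>S. f i \<in> A"
  shows "(\<lambda>p. \<Sum>i\<in>S. f i p) \<in> A"
  using assms(2,3)
proof (induction S rule: finite_induct)
  case empty then show ?case using sub_const[OF assms(1)] by simp
next
  case (insert x F) then show ?case using sub_add[OF assms(1), of "f x" "\<lambda>p. \<Sum>i\<in>F. f i p"] by simp
qed

lemma der_in: "derivation_on A D \<Longrightarrow> a \<in> A \<Longrightarrow> D a \<in> A"
  unfolding derivation_on_def by blast
lemma der_add: "derivation_on A D \<Longrightarrow> a \<in> A \<Longrightarrow> b \<in> A \<Longrightarrow> D (\<lambda>p. a p + b p) = (\<lambda>p. D a p + D b p)"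
  unfolding derivation_on_def by blast
lemma der_cmul: "derivation_on A D \<Longrightarrow> a \<in> A \<Longrightarrow> D (\<lambda>p. c * a p) = (\<lambda>p. c * D a p)"
  unfolding derivation_on_def by blast
lemma der_mul: "derivation_on A D \<Longrightarrow> a \<in> A \<Longrightarrow> b \<in> A \<Longrightarrow> D (\<lambda>p. a p * b p) = (\<lambda>p. D a p * b p + a p * D b p)"
  unfolding derivation_on_def by blast
lemma der_zero: assumes "derivation_on A D" "fun_subalgebra A" shows "D (\<lambda>p. 0) = (\<lambda>p. 0)"
  using der_cmul[OF assms(1) sub_const[OF assms(2)], of 0 0] by simp

lemma der_sum: assumes "derivation_on A D" "fun_subalgebra A" "finite S" "\<forall>i\<in>S. f i \<in> A"
  shows "D (\<lambda>p. \<Sum>i\<in>S. f i p) = (\<lambda>p. \<Sum>i\<in>S. D (f i) p)"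
  using assms(3,4)
proof (induction S rule: finite_induct)
  case empty then show ?case using der_zero[OF assms(1,2)] by simp
next
  case (insert x F)
  have "(\<lambda>p. \<Sum>i\<in>F. f i p) \<in> A" using sub_sum[OF assms(2) insert(1)] insert.prems by simp
  then show ?case using insert der_add[OF assms(1), of "f x" "\<lambda>p. \<Sum>i\<in>F. f i p"] by simp
qed

lemma der_sumprod: assumes "derivation_on A D" "fun_subalgebra A" "finite S" "\<forall>i\<in>S. f i \<in> A" "\<forall>i\<in>S. g i \<in> A"
  shows "D (\<lambda>p. \<Sum>i\<in>S. f i p * g i p) p = (\<Sum>i\<in>S. D (f i) p * g i p + f i p * D (g i) p)"
proof -
  have "D (\<lambda>p. \<Sum>i\<in>S. f i p * g i p) = (\<lambda>p. \<Sum>i\<in>S. D (\<lambda>q. f i q * g i q) p)"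
    using der_sum[OF assms(1,2,3), of "\<lambda>i q. f i q * g i q"] sub_mul[OF assms(2)] assms(4,5) by simp
  then show ?thesis using der_mul[OF assms(1)] assms(4,5) by simp
qed

lemma der_lin: assumes "derivation_on A D" "fun_subalgebra A" "x \<in> A" "y \<in> A"
  shows "D (\<lambda>p. c * x p + d * y p) = (\<lambda>p. c * D x p + d * D y p)"
  using der_add[OF assms(1) sub_cmul[OF assms(2,3)] sub_cmul[OF assms(2,4)], of c d]
    der_cmul[OF assms(1) assms(3)] der_cmul[OF assms(1) assms(4)] by simp


lemma core:
  fixes E H :: "'n::finite \<Rightarrow> ('m\<Rightarrow>complex) \<Rightarrow> ('m\<Rightarrow>complex)"
  assumes SA: "fun_subalgebra A"
    and dE: "\<And>i. derivation_on A (E i)" and dH: "\<And>i. derivation_on A (H i)"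
    and T: "\<And>x y p. x\<in>A \<Longrightarrow> y\<in>A \<Longrightarrow> (\<Sum>i\<in>UNIV. H i x p * E i y p) = - (\<Sum>i\<in>UNIV. E i x p * H i y p)"
    and HH: "\<And>x p i j. x\<in>A \<Longrightarrow> H i (H j x) p - H j (H i x) p = (\<Sum>k\<in>UNIV. al i j k * H k x p)"
    and HE: "\<And>x p i j. x\<in>A \<Longrightarrow> H i (E j x) p - E j (H i x) p = (\<Sum>k\<in>UNIV. be i j k * H k x p + ga i j k * E k x p)"
    and EE: "\<And>x p i j. x\<in>A \<Longrightarrow> E i (E j x) p - E j (E i x) p = (\<Sum>k\<in>UNIV. de i j k * E k x p)"
    and R1: "\<And>i j k. al i j k + ga i k j = 0"
    and R2: "\<And>i j k. be k j i + de i j k = 0"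
    and abc: "a \<in> A" "b \<in> A" "c \<in> A"
    and Fdef: "\<And>x y. F x y = (\<lambda>p. \<Sum>i\<in>UNIV. E i x p * H i y p)"
  shows "F a (F b c) p - F b (F a c) p - F (F a b) c p = 0"
proof -
  have EA: "E i x \<in> A" if "x \<in> A" for i x using der_in[OF dE that] .
  have HA: "H i x \<in> A" if "x \<in> A" for i x using der_in[OF dH that] .
  have FA: "F x y \<in> A" if "x \<in> A" "y \<in> A" for x y
    unfolding Fdef by (rule sub_sum[OF SA]) (auto intro: sub_mul[OF SA] EA HA that)
  have DF: "D (F x y) p = (\<Sum>j\<in>UNIV. D (E j x) p * H j y p + E j x p * D (H j y) p)"
    if "derivation_on A D" "x \<in> A" "y \<in> A" for D x y
    unfolding Fdef by (rule der_sumprod[OF that(1) SA]) (auto intro: EA HA that)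
  have s1: "F a (F b c) p = (\<Sum>i\<in>UNIV. \<Sum>j\<in>UNIV. E i a p * H i (E j b) p * H j c p + E i a p * E j b p * H i (H j c) p)"
    by (subst Fdef, simp add: DF[OF dH] abc sum_distrib_left algebra_simps)
  have s2: "F b (F a c) p = (\<Sum>i\<in>UNIV. \<Sum>j\<in>UNIV. E i b p * H i (E j a) p * H j c p + E i b p * E j a p * H i (H j c) p)"
    by (subst Fdef, simp add: DF[OF dH] abc sum_distrib_left algebra_simps)
  have s3: "F (F a b) c p = (\<Sum>i\<in>UNIV. \<Sum>j\<in>UNIV. E i (E j a) p * H j b p * H i c p + E j a p * E i (H j b) p * H i c p)"
  proof -
    have "F (F a b) c p = (\<Sum>i\<in>UNIV. E i (F a b) p * H i c p)" by (rule fun_cong[OF Fdef])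
    then show ?thesis by (simp add: DF[OF dE abc(1,2)] sum_distrib_right sum_distrib_left algebra_simps)
  qed
  have w1: "(\<Sum>i\<in>UNIV. \<Sum>j\<in>UNIV. E i b p * E j a p * H i (H j c) p) = (\<Sum>i\<in>UNIV. \<Sum>j\<in>UNIV. E j b p * E i a p * H j (H i c) p)"
    by (rule sum.swap)
  have w2: "(\<Sum>i\<in>UNIV. \<Sum>j\<in>UNIV. E i (E j a) p * H j b p * H i c p) = (\<Sum>i\<in>UNIV. \<Sum>j\<in>UNIV. E j (E i a) p * H i b p * H j c p)"
    by (rule sum.swap)
  have w3: "(\<Sum>i\<in>UNIV. \<Sum>j\<in>UNIV. E j a p * E i (H j b) p * H i c p) = (\<Sum>i\<in>UNIV. \<Sum>j\<in>UNIV. E i a p * E j (H i b) p * H j c p)"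
    by (rule sum.swap)
  have w4: "(\<Sum>i\<in>UNIV. \<Sum>j\<in>UNIV. E i b p * H i (E j a) p * H j c p) = - (\<Sum>i\<in>UNIV. \<Sum>j\<in>UNIV. H i b p * H j c p * E i (E j a) p)"
  proof -
    have "(\<Sum>i\<in>UNIV. \<Sum>j\<in>UNIV. E i b p * H i (E j a) p * H j c p) = (\<Sum>j\<in>UNIV. H j c p * (\<Sum>i\<in>UNIV. H i (E j a) p * E i b p))"
      by (subst sum.swap) (simp add: sum_distrib_left mult_ac)
    also have "\<dots> = (\<Sum>j\<in>UNIV. H j c p * (- (\<Sum>i\<in>UNIV. E i (E j a) p * H i b p)))"
      using T[OF EA[OF abc(1)] abc(2)] by simp
    also have "\<dots> = - (\<Sum>i\<in>UNIV. \<Sum>j\<in>UNIV. H i b p * H j c p * E i (E j a) p)"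
      by (subst sum.swap) (simp add: sum_distrib_left mult_ac sum_negf)
    finally show ?thesis .
  qed
  define X where "X i j = E i a p * E j b p * (H i (H j c) p - H j (H i c) p)
      + E i a p * (H i (E j b) p - E j (H i b) p) * H j c p
      + H i b p * H j c p * (E i (E j a) p - E j (E i a) p)" for i j
  have step1: "F a (F b c) p - F b (F a c) p - F (F a b) c p = (\<Sum>i\<in>UNIV. \<Sum>j\<in>UNIV. X i j)"
  proof -
    have "(\<Sum>i\<in>UNIV. \<Sum>j\<in>UNIV. X i j) =
       (\<Sum>i\<in>UNIV. \<Sum>j\<in>UNIV. E i a p * E j b p * H i (H j c) p)
     + (\<Sum>i\<in>UNIV. \<Sum>j\<in>UNIV. E i a p * H i (E j b) p * H j c p)
     - (\<Sum>i\<in>UNIV. \<Sum>j\<in>UNIV. E j b p * E i a p * H j (H i c) p)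
     - (\<Sum>i\<in>UNIV. \<Sum>j\<in>UNIV. E i a p * E j (H i b) p * H j c p)
     + (\<Sum>i\<in>UNIV. \<Sum>j\<in>UNIV. H i b p * H j c p * E i (E j a) p)
     - (\<Sum>i\<in>UNIV. \<Sum>j\<in>UNIV. E j (E i a) p * H i b p * H j c p)"
      unfolding X_def by (simp add: sum.distrib sum_subtractf algebra_simps)
    also have "\<dots> = F a (F b c) p - F b (F a c) p - F (F a b) c p"
      unfolding s1 s2 s3 w1[symmetric] w2[symmetric] w3[symmetric]
      by (simp add: sum.distrib w4)
    finally show ?thesis by simp
  qed
  define Y where "Y i j k = E i a p * E j b p * al i j k * H k c p
      + E i a p * be i j k * H k b p * H j c p
      + E i a p * ga i j k * E k b p * H j c p
      + H i b p * H j c p * de i j k * E k a p" for i j k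
  have step2: "X i j = (\<Sum>k\<in>UNIV. Y i j k)" for i j
    unfolding X_def Y_def HH[OF abc(3)] HE[OF abc(2)] EE[OF abc(1)]
    by (simp add: sum_distrib_left sum_distrib_right sum.distrib algebra_simps)
  have z1: "(\<Sum>i\<in>UNIV. \<Sum>j\<in>UNIV. \<Sum>k\<in>UNIV. E i a p * E j b p * al i j k * H k c p + E i a p * ga i j k * E k b p * H j c p) = 0"
  proof -
    have "(\<Sum>i\<in>UNIV. \<Sum>j\<in>UNIV. \<Sum>k\<in>UNIV. E i a p * ga i j k * E k b p * H j c p)
        = (\<Sum>i\<in>UNIV. \<Sum>j\<in>UNIV. \<Sum>k\<in>UNIV. E i a p * ga i k j * E j b p * H k c p)"
      by (rule swap23)
    then have "(\<Sum>i\<in>UNIV. \<Sum>j\<in>UNIV. \<Sum>k\<in>UNIV. E i a p * E j b p * al i j k * H k c p + E i a p * ga i j k * E k b p * H j c p)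
      = (\<Sum>i\<in>UNIV. \<Sum>j\<in>UNIV. \<Sum>k\<in>UNIV. E i a p * E j b p * H k c p * (al i j k + ga i k j))"
      by (simp add: sum.distrib algebra_simps)
    also have "\<dots> = 0" by (simp add: R1)
    finally show ?thesis .
  qed
  have z2: "(\<Sum>i\<in>UNIV. \<Sum>j\<in>UNIV. \<Sum>k\<in>UNIV. E i a p * be i j k * H k b p * H j c p + H i b p * H j c p * de i j k * E k a p) = 0"
  proof -
    have "(\<Sum>i\<in>UNIV. \<Sum>j\<in>UNIV. \<Sum>k\<in>UNIV. H i b p * H j c p * de i j k * E k a p)
        = (\<Sum>k\<in>UNIV. \<Sum>j\<in>UNIV. \<Sum>i\<in>UNIV. H i b p * H j c p * de i j k * E k a p)"
      by (rule swap3)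
    then have "(\<Sum>i\<in>UNIV. \<Sum>j\<in>UNIV. \<Sum>k\<in>UNIV. E i a p * be i j k * H k b p * H j c p + H i b p * H j c p * de i j k * E k a p)
      = (\<Sum>i\<in>UNIV. \<Sum>j\<in>UNIV. \<Sum>k\<in>UNIV. E i a p * H k b p * H j c p * (be i j k + de k j i))"
      by (simp add: sum.distrib algebra_simps)
    also have "\<dots> = 0" by (simp add: R2)
    finally show ?thesis .
  qed
  have "(\<Sum>i\<in>UNIV. \<Sum>j\<in>UNIV. X i j) = (\<Sum>i\<in>UNIV. \<Sum>j\<in>UNIV. \<Sum>k\<in>UNIV. E i a p * E j b p * al i j k * H k c p + E i a p * ga i j k * E k b p * H j c p)
     + (\<Sum>i\<in>UNIV. \<Sum>j\<in>UNIV. \<Sum>k\<in>UNIV. E i a p * be i j k * H k b p * H j c p + H i b p * H j c p * de i j k * E k a p)"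
    unfolding step2 Y_def by (simp add: sum.distrib algebra_simps)
  then have "(\<Sum>i\<in>UNIV. \<Sum>j\<in>UNIV. X i j) = 0" using z1 z2 by simp
  then show ?thesis using step1 by simp
qed


lemma act_facts:
  assumes "lie_action_on A B act"
  shows "derivation_on A (act u)"
    and "x \<in> A \<Longrightarrow> act (u + v) x = (\<lambda>p. act u x p + act v x p)"
    and "x \<in> A \<Longrightarrow> act (c *s u) x = (\<lambda>p. c * act u x p)"
    and "x \<in> A \<Longrightarrow> act (B u v) x p = act u (act v x) p - act v (act u x) p"
  using assms unfolding lie_action_on_def by auto

lemma act_sum:
  assumes "lie_action_on A B act" "x \<in> A" "finite S"
  shows "act (\<Sum>k\<in>S. v k) x p = (\<Sum>k\<in>S. act (v k) x p)"
  using assms(3)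
proof (induction S rule: finite_induct)
  case empty
  have "act ((0::complex) *s 0) x = (\<lambda>p. 0 * act 0 x p)" using act_facts(3)[OF assms(1,2)] .
  then show ?case by simp
next
  case (insert y F)
  then show ?case using act_facts(2)[OF assms(1,2), of "v y" "\<Sum>k\<in>F. v k"] by simp
qed

lemma act_exp:
  assumes "lie_action_on A B act" "x \<in> A"
  shows "act u x p = (\<Sum>k\<in>UNIV. pairD u (etaD k) * act (hD k) x p + pairD u (hD k) * act (etaD k) x p)"
proof -
  have "act u x p = act (\<Sum>k\<in>UNIV. u$k *s axis k 1) x p" by (subst basis_exp[of u]) (rule refl)
  also have "\<dots> = (\<Sum>k\<in>UNIV. act (u$k *s axis k 1) x p)" by (rule act_sum[OF assms]) simp
  also have "\<dots> = (\<Sum>k\<in>UNIV. u$k * act (axis k 1) x p)"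
    using act_facts(3)[OF assms] by simp
  also have "\<dots> = (\<Sum>k\<in>UNIV. u$Inl k * act (hD k) x p) + (\<Sum>k\<in>UNIV. u$Inr k * act (etaD k) x p)"
    by (subst sumP) (simp add: hD_def etaD_def)
  finally show ?thesis by (simp add: pair_eta pair_h sum.distrib)
qed


theorem proposition3p15:
  fixes br :: "complex^'n::finite \<Rightarrow> complex^'n \<Rightarrow> complex^'n"
    and delta :: "complex^'n \<Rightarrow> complex^'n^'n"
    and bD :: "complex^('n + 'n) \<Rightarrow> complex^('n + 'n) \<Rightarrow> complex^('n + 'n)"
    and A :: "('m \<Rightarrow> complex) set"
    and act :: "complex^('n + 'n) \<Rightarrow> ('m \<Rightarrow> complex) \<Rightarrow> ('m \<Rightarrow> complex)"
  assumes "poisson_base_manifold br delta bD A act"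
  shows "poisson_bracket_on A (varpi act)
     \<and> poisson_lie_manifold A act (mu_op bD act) (varpi act)
     \<and> (\<forall>a\<in>A. \<forall>b\<in>A. varpi act a b = (\<lambda>p. \<Sum>i\<in>(UNIV::'n set). act (etaD i) a p * act (hD i) b p))"
proof -
  have SA: "fun_subalgebra A" and LA: "lie_action_on A bD act"
    and TH: "\<And>a b. a\<in>A \<Longrightarrow> b\<in>A \<Longrightarrow> theta_op act a b = (\<lambda>p. 0)"
    and DD: "drinfeld_double_bracket br delta bD"
    using assms unfolding poisson_base_manifold_def by auto
  have LB: "lie_bracket_on bD" and bHH: "\<And>x y. bD (embH x) (embH y) = embH (br x y)"
    and bSS: "\<And>xi zeta. bD (embHs xi) (embHs zeta) = embHs (- dual_br delta xi zeta)"
    and INV: "\<And>u v w. pairD (bD u v) w = pairD u (bD v w)"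
    using DD unfolding drinfeld_double_bracket_def by auto
  note dA = act_facts(1)[OF LA]
  have AA: "act u x \<in> A" if "x \<in> A" for u x using der_in[OF dA that] .
  define F where "F x y = (\<lambda>p. \<Sum>i\<in>(UNIV::'n set). act (etaD i) x p * act (hD i) y p)" for x y
  have T: "(\<Sum>i\<in>UNIV. act (hD i) x p * act (etaD i) y p) = - (\<Sum>i\<in>UNIV. act (etaD i) x p * act (hD i) y p)"
    if "x\<in>A" "y\<in>A" for x y p
  proof -
    have "theta_op act x y p = 0" using TH[OF that] by simp
    then have "(\<Sum>i\<in>UNIV. act (etaD i) x p * act (hD i) y p + act (hD i) x p * act (etaD i) y p) = 0"
      unfolding theta_op_def simple_op_def by simp
    then show ?thesis by (simp add: sum.distrib add_eq_0_iff2 add.commute)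
  qed
  have V: "varpi act x y = F x y" if "x\<in>A" "y\<in>A" for x y
  proof
    fix p
    have "varpi act x y p = ((\<Sum>i\<in>UNIV. act (etaD i) x p * act (hD i) y p) - (\<Sum>i\<in>UNIV. act (hD i) x p * act (etaD i) y p)) / 2"
      unfolding varpi_def wedge_op_def by (simp add: sum_divide_distrib[symmetric] sum_subtractf)
    then show "varpi act x y p = F x y p" unfolding F_def using T[OF that, of p] by simp
  qed
  have FA: "F x y \<in> A" if "x\<in>A" "y\<in>A" for x y
    unfolding F_def by (rule sub_sum[OF SA]) (auto intro: sub_mul[OF SA] AA that)
  have VA: "varpi act x y \<in> A" if "x\<in>A" "y\<in>A" for x y using V[OF that] FA[OF that] by simp
  have ANT: "varpi act x y = (\<lambda>p. - varpi act y x p)" for x y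
    unfolding varpi_def wedge_op_def by (rule ext, subst sum_negf[symmetric], rule sum.cong) (auto simp: field_simps)
  have D1: "derivation_on A (varpi act a)" if a: "a \<in> A" for a
    unfolding derivation_on_def
  proof (intro conjI ballI allI)
    fix b assume "b \<in> A" then show "varpi act a b \<in> A" using VA a by blast
  next
    fix b b' assume bb: "b \<in> A" "b' \<in> A"
    show "varpi act a (\<lambda>p. b p + b' p) = (\<lambda>p. varpi act a b p + varpi act a b' p)"
      using V[OF a] bb sub_add[OF SA bb] der_add[OF dA bb]
      by (simp add: F_def sum.distrib distrib_left)
    show "varpi act a (\<lambda>p. b p * b' p) = (\<lambda>p. varpi act a b p * b' p + b p * varpi act a b' p)"
      using V[OF a] bb sub_mul[OF SA bb] der_mul[OF dA bb]
      by (simp add: F_def sum.distrib distrib_left sum_distrib_left sum_distrib_right algebra_simps)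
  next
    fix c b assume bb: "b \<in> A"
    show "varpi act a (\<lambda>p. c * b p) = (\<lambda>p. c * varpi act a b p)"
      using V[OF a] bb sub_cmul[OF SA bb] der_cmul[OF dA bb]
      by (simp add: F_def sum_distrib_left algebra_simps)
  qed
  have D2: "derivation_on A (\<lambda>a. varpi act a b)" if b: "b \<in> A" for b
    unfolding derivation_on_def
  proof (intro conjI ballI allI)
    fix a assume "a \<in> A" then show "varpi act a b \<in> A" using VA b by blast
  next
    fix a a' assume aa: "a \<in> A" "a' \<in> A"
    show "varpi act (\<lambda>p. a p + a' p) b = (\<lambda>p. varpi act a b p + varpi act a' b p)"
      using V aa b sub_add[OF SA aa] der_add[OF dA aa]
      by (simp add: F_def sum.distrib distrib_right)
    show "varpi act (\<lambda>p. a p * a' p) b = (\<lambda>p. varpi act a b p * a' p + a p * varpi act a' b p)"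
      using V aa b sub_mul[OF SA aa] der_mul[OF dA aa]
      by (simp add: F_def sum.distrib distrib_left sum_distrib_left sum_distrib_right algebra_simps)
  next
    fix c a assume aa: "a \<in> A"
    show "varpi act (\<lambda>p. c * a p) b = (\<lambda>p. c * varpi act a b p)"
      using V aa b sub_cmul[OF SA aa] der_cmul[OF dA aa]
      by (simp add: F_def sum_distrib_left algebra_simps)
  qed
  have anti: "bD u v + bD v u = 0" for u v using lie_antisym[OF LB] .
  have isoH: "pairD (bD (hD i) (hD j)) (hD k) = 0" for i j k
    by (simp add: hD_emb bHH pair_HH)
  have isoE: "pairD (bD (etaD i) (etaD j)) (etaD k) = 0" for i j k
    by (simp add: etaD_emb bSS pair_SS)
  have R1: "pairD (bD (hD i) (hD j)) (etaD k) + pairD (bD (hD i) (etaD k)) (hD j) = 0" for i j k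
  proof -
    have "pairD (bD (hD i) (hD j)) (etaD k) + pairD (bD (hD i) (etaD k)) (hD j)
       = pairD (hD i) (bD (hD j) (etaD k) + bD (etaD k) (hD j))"
      by (simp add: INV pair_add)
    then show ?thesis by (simp add: anti pair_zero)
  qed
  have R2: "pairD (bD (hD k) (etaD j)) (etaD i) + pairD (bD (etaD i) (etaD j)) (hD k) = 0" for i j k
  proof -
    have "pairD (bD (hD k) (etaD j)) (etaD i) + pairD (bD (etaD i) (etaD j)) (hD k)
       = pairD (hD k) (bD (etaD j) (etaD i) + bD (etaD i) (etaD j))"
      by (simp add: INV pair_add pair_sym[of _ "hD k"])
    then show ?thesis by (simp add: anti pair_zero)
  qed
  have HH: "act (hD i) (act (hD j) x) p - act (hD j) (act (hD i) x) p
      = (\<Sum>k\<in>UNIV. pairD (bD (hD i) (hD j)) (etaD k) * act (hD k) x p)" if "x \<in> A" for x p i j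
    using act_facts(4)[OF LA that, of "hD i" "hD j" p, symmetric] act_exp[OF LA that, of "bD (hD i) (hD j)" p]
    by (simp add: isoH)
  have EE: "act (etaD i) (act (etaD j) x) p - act (etaD j) (act (etaD i) x) p
      = (\<Sum>k\<in>UNIV. pairD (bD (etaD i) (etaD j)) (hD k) * act (etaD k) x p)" if "x \<in> A" for x p i j
    using act_facts(4)[OF LA that, of "etaD i" "etaD j" p, symmetric] act_exp[OF LA that, of "bD (etaD i) (etaD j)" p]
    by (simp add: isoE)
  have HE: "act (hD i) (act (etaD j) x) p - act (etaD j) (act (hD i) x) p
      = (\<Sum>k\<in>UNIV. pairD (bD (hD i) (etaD j)) (etaD k) * act (hD k) x p + pairD (bD (hD i) (etaD j)) (hD k) * act (etaD k) x p)"
    if "x \<in> A" for x p i j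
    using act_facts(4)[OF LA that, of "hD i" "etaD j" p, symmetric] act_exp[OF LA that, of "bD (hD i) (etaD j)" p]
    by simp
  have JAC: "F a (F b c) p - F b (F a c) p - F (F a b) c p = 0" if "a\<in>A" "b\<in>A" "c\<in>A" for a b c p
    by (rule core[where E="\<lambda>i. act (etaD i)" and H="\<lambda>i. act (hD i)" and A=A,
          OF SA dA dA T HH HE EE R1 R2 that F_def])
  have PB: "poisson_bracket_on A (varpi act)"
    unfolding poisson_bracket_on_def
  proof (intro conjI ballI)
    fix a b assume "a\<in>A" "b\<in>A" then show "varpi act a b = (\<lambda>p. - varpi act b a p)" using ANT by blast
  next
    fix a assume "a\<in>A" then show "derivation_on A (varpi act a)" by (rule D1)
  next
    fix b assume "b\<in>A" then show "derivation_on A (\<lambda>a. varpi act a b)" by (rule D2)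
  next
    fix a b c assume abc: "a\<in>A" "b\<in>A" "c\<in>A"
    show "(\<lambda>p. varpi act a (varpi act b c) p + varpi act b (varpi act c a) p + varpi act c (varpi act a b) p) = (\<lambda>p. 0)"
    proof
      fix p
      have e1: "varpi act b (varpi act c a) p = - varpi act b (varpi act a c) p"
      proof -
        have "varpi act c a = (\<lambda>p. (-1) * varpi act a c p)" using ANT[of c a] by simp
        then show ?thesis using der_cmul[OF D1[OF abc(2)] VA[OF abc(1,3)], of "-1"] by simp
      qed
      have e2: "varpi act c (varpi act a b) p = - varpi act (varpi act a b) c p" using ANT by metis
      show "varpi act a (varpi act b c) p + varpi act b (varpi act c a) p + varpi act c (varpi act a b) p = 0"
        using JAC[OF abc, of p] unfolding e1 e2
        by (simp add: V abc VA FA)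
    qed
  qed
  have PL: "(\<lambda>p. act x (varpi act a b) p - varpi act (act x a) b p - varpi act a (act x b) p) = mu_op bD act x a b"
    if ab: "a\<in>A" "b\<in>A" for x a b
  proof
    fix p
    let ?E = "\<lambda>i. act (etaD i)" and ?H = "\<lambda>i. act (hD i)"
    have w: "(\<lambda>p. wedge_op act (etaD i) (hD i) a b p) = (\<lambda>p. (1/2) * (\<lambda>q. ?E i a q * ?H i b q) p + (-1/2) * (\<lambda>q. ?H i a q * ?E i b q) p)" for i
      unfolding wedge_op_def by (auto simp: field_simps)
    have wA: "(\<lambda>p. wedge_op act (etaD i) (hD i) a b p) \<in> A" for i
      unfolding w by (intro sub_add[OF SA] sub_cmul[OF SA] sub_mul[OF SA] AA ab)
    have "act x (varpi act a b) p = (\<Sum>i\<in>UNIV. act x (\<lambda>p. wedge_op act (etaD i) (hD i) a b p) p)"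
      unfolding varpi_def using der_sum[OF dA SA, of UNIV "\<lambda>i p. wedge_op act (etaD i) (hD i) a b p"] wA by simp
    also have "\<dots> = (\<Sum>i\<in>UNIV. (1/2) * (act x (?E i a) p * ?H i b p + ?E i a p * act x (?H i b) p)
        + (-1/2) * (act x (?H i a) p * ?E i b p + ?H i a p * act x (?E i b) p))"
    proof (rule sum.cong[OF refl])
      fix i
      have "act x (\<lambda>p. wedge_op act (etaD i) (hD i) a b p) = act x (\<lambda>p. (1/2) * (\<lambda>q. ?E i a q * ?H i b q) p + (-1/2) * (\<lambda>q. ?H i a q * ?E i b q) p)"
        by (simp only: w)
      also have "\<dots> = (\<lambda>p. (1/2) * act x (\<lambda>q. ?E i a q * ?H i b q) p + (-1/2) * act x (\<lambda>q. ?H i a q * ?E i b q) p)"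
        by (rule der_lin[OF dA SA]) (intro sub_mul[OF SA] AA ab)+
      finally show "act x (\<lambda>p. wedge_op act (etaD i) (hD i) a b p) p = (1/2) * (act x (?E i a) p * ?H i b p + ?E i a p * act x (?H i b) p)
        + (-1/2) * (act x (?H i a) p * ?E i b p + ?H i a p * act x (?E i b) p)"
        by (simp add: der_mul[OF dA] AA ab)
    qed
    finally have l1: "act x (varpi act a b) p = \<dots>" .
    have a1: "act (bD x (etaD i)) y p = act x (?E i y) p - ?E i (act x y) p" if "y \<in> A" for i y
      using act_facts(4)[OF LA that] by simp
    have a2: "act (bD x (hD i)) y p = act x (?H i y) p - ?H i (act x y) p" if "y \<in> A" for i y
      using act_facts(4)[OF LA that] by simp
    show "act x (varpi act a b) p - varpi act (act x a) b p - varpi act a (act x b) p = mu_op bD act x a b p"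
      unfolding l1 unfolding varpi_def mu_op_def wedge_op_def a1[OF ab(1)] a1[OF ab(2)] a2[OF ab(1)] a2[OF ab(2)]
      by (simp only: sum_subtractf[symmetric], rule sum.cong[OF refl], simp add: field_simps)
  qed
  show ?thesis
    using PB PL V unfolding poisson_lie_manifold_def F_def by blast
qed

end
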